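(* Let $H_1$ and $H_2$ be any two finite simple graphs and let $H_1\sqcup H_2$ denote their disjoint union. Then $\bar C_{H_1\sqcup H_2}=\max(\bar C_{H_1},\bar C_{H_2})$.
   Context: For a graph $G$, $\mathrm{Ind}(G)$ is its independence complex (including the empty face) and $\tilde b(G)=\sum_{i\ge-1}\dim_{\mathbb{K}}\widetilde H_i(\mathrm{Ind}(G);\mathbb{K})$ for a fixed field $\mathbb{K}$. $\bar b_H(n)$ is the maximum of $\tilde b(G)$ over all graphs $G$ on at most $n$ vertices with no induced copy of $H$, and $\bar C_H=\limsup_{n\to\infty}\sqrt[n]{\bar b_H(n)}$. *)

theory Defs
  imports Complex_Main "HOL-Library.Liminf_Limsup" "HOL-Library.Extended_Real" "HOL-Library.Function_Algebras"
begin

type_synonym 'v graph = "'v set \<times> ('v \<Rightarrow> 'v \<Rightarrow> bool)"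

definition simple_graph :: "'v graph \<Rightarrow> bool" where
  "simple_graph G \<longleftrightarrow> finite (fst G) \<and>
     (\<forall>x y. snd G x y \<longrightarrow> x \<in> fst G \<and> y \<in> fst G \<and> x \<noteq> y \<and> snd G y x)"

definition has_induced_copy :: "'w graph \<Rightarrow> 'v graph \<Rightarrow> bool" where
  "has_induced_copy H G \<longleftrightarrow> (\<exists>f. inj_on f (fst H) \<and> f ` fst H \<subseteq> fst G \<and>
     (\<forall>x\<in>fst H. \<forall>y\<in>fst H. snd G (f x) (f y) \<longleftrightarrow> snd H x y))"

definition disj_union :: "'a graph \<Rightarrow> 'b graph \<Rightarrow> ('a + 'b) graph" where
  "disj_union H1 H2 = (Inl ` fst H1 \<union> Inr ` fst H2,
     (\<lambda>u v. case (u, v) of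
        (Inl x, Inl y) \<Rightarrow> snd H1 x y
      | (Inr x, Inr y) \<Rightarrow> snd H2 x y
      | _ \<Rightarrow> False))"

(* faces of the independence complex Ind(G), including the empty face *)
definition ind_faces :: "nat graph \<Rightarrow> nat set set" where
  "ind_faces G = {\<sigma>. \<sigma> \<subseteq> fst G \<and> (\<forall>x\<in>\<sigma>. \<forall>y\<in>\<sigma>. \<not> snd G x y)}"

(* simplicial chains supported on faces with k elements (dimension k-1), coefficients in 'k *)
definition chains :: "'k::field itself \<Rightarrow> nat graph \<Rightarrow> nat \<Rightarrow> (nat set \<Rightarrow> 'k) set" where
  "chains _ G k = {c. \<forall>\<sigma>. c \<sigma> \<noteq> 0 \<longrightarrow> \<sigma> \<in> ind_faces G \<and> card \<sigma> = k}"

(* augmented simplicial boundary map from k-element faces to (k-1)-element faces,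
   vertices oriented by the natural order on nat; boundary of 0-element (empty) face is 0 *)
definition bd :: "nat graph \<Rightarrow> nat \<Rightarrow> (nat set \<Rightarrow> 'k::field) \<Rightarrow> (nat set \<Rightarrow> 'k)" where
  "bd G k c = (\<lambda>\<tau>. if k = 0 then 0
      else if \<tau> \<in> ind_faces G \<and> card \<tau> = k - 1
      then (\<Sum>v\<in>fst G - \<tau>. (-1) ^ card {u\<in>\<tau>. u < v} * c (insert v \<tau>))
      else 0)"

definition fscale :: "'k::field \<Rightarrow> (nat set \<Rightarrow> 'k) \<Rightarrow> (nat set \<Rightarrow> 'k)" where
  "fscale r f = (\<lambda>x. r * f x)"

definition kdim :: "(nat set \<Rightarrow> 'k::field) set \<Rightarrow> nat" where
  "kdim S = vector_space.dim fscale S"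

(* dim of reduced homology H_{k-1}(Ind G; 'k) = dim ker bd_k - dim im bd_{k+1} *)
definition red_betti :: "'k::field itself \<Rightarrow> nat graph \<Rightarrow> nat \<Rightarrow> nat" where
  "red_betti K G k =
     kdim {c \<in> chains K G k. bd G k c = (\<lambda>_. 0)} - kdim (bd G (Suc k) ` chains K G (Suc k))"

(* total reduced Betti number, summing H_i for i = -1 .. |V|-1 *)
definition btilde :: "'k::field itself \<Rightarrow> nat graph \<Rightarrow> nat" where
  "btilde K G = (\<Sum>k\<in>{0..card (fst G)}. red_betti K G k)"

(* max of btilde over H-free graphs on at most n vertices (w.l.o.g. vertex set within {0..<n}) *)
definition bbar :: "'k::field itself \<Rightarrow> 'w graph \<Rightarrow> nat \<Rightarrow> nat" where
  "bbar K H n = Sup {btilde K G | G. simple_graph G \<and> fst G \<subseteq> {..<n} \<and> \<not> has_induced_copy H G}"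

definition Cbar :: "'k::field itself \<Rightarrow> 'w graph \<Rightarrow> ereal" where
  "Cbar K H = limsup (\<lambda>n. ereal (root n (real (bbar K H n))))"

end

theory Submission
  imports Defs
begin



lemma fscale_vs: "vector_space (fscale :: 'k::field \<Rightarrow> (nat set \<Rightarrow> 'k) \<Rightarrow> _)"
  by unfold_locales (auto simp: fscale_def fun_eq_iff algebra_simps)

interpretation vs: vector_space "fscale :: 'k::field \<Rightarrow> (nat set \<Rightarrow> 'k) \<Rightarrow> _"
  by (rule fscale_vs)

lemma kdim_eq: "kdim S = vs.dim S" by (simp add: kdim_def)

context vector_space begin

lemma dim_le_sub:
  assumes "S \<subseteq> T" "T \<subseteq> span W" "finite W"
  shows "dim S \<le> dim T"
proof -
  obtain BS where BS: "BS \<subseteq> S" "independent BS" "S \<subseteq> span BS" "card BS = dim S" by (rule basis_exists)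
  obtain BT where BT: "BT \<subseteq> T" "independent BT" "T \<subseteq> span BT" "card BT = dim T" by (rule basis_exists)
  have "finite BT" using independent_span_bound[OF assms(3) BT(2)] BT(1) assms(2) by blast
  moreover have "BS \<subseteq> span BT" using BS(1) assms(1) BT(3) by blast
  ultimately have "card BS \<le> card BT" using independent_span_bound[OF _ BS(2)] by blast
  then show ?thesis using BS BT by simp
qed

lemma dim_zero: "S \<subseteq> {0} \<Longrightarrow> dim S = 0"
  using dim_le_card[of S "{}"] by auto

lemma rank_nullity:
  assumes lin: "Vector_Spaces.linear scale scale f" and sub: "subspace S" and fin: "S \<subseteq> span W" "finite W"
  shows "dim S = dim {x\<in>S. f x = 0} + dim (f ` S)"
proof -
  interpret L: Vector_Spaces.linear scale scale f by fact
  define K where "K = {x\<in>S. f x = 0}"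
  obtain BK where BK: "BK \<subseteq> K" "independent BK" "K \<subseteq> span BK" "card BK = dim K" by (rule basis_exists)
  have finBK: "finite BK" using independent_span_bound[OF fin(2) BK(2)] BK(1) fin(1) K_def by blast
  obtain BF where BF: "BF \<subseteq> f ` S" "independent BF" "f ` S \<subseteq> span BF" "card BF = dim (f ` S)" by (rule basis_exists)
  have "f ` S \<subseteq> span (f ` W)" using fin(1) L.span_image by blast
  then have finBF: "finite BF" using independent_span_bound[OF _ BF(2)] BF(1) fin(2) by blast
  have "\<forall>y\<in>BF. \<exists>x. x \<in> S \<and> f x = y" using BF(1) by blast
  then obtain g where g0: "\<forall>y\<in>BF. g y \<in> S \<and> f (g y) = y" by metis
  have g: "\<And>y. y \<in> BF \<Longrightarrow> g y \<in> S \<and> f (g y) = y" using g0 by blast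
  define P where "P = g ` BF"
  have PS: "P \<subseteq> S" using g P_def by auto
  have fP: "f ` P = BF" using g P_def by force
  have cardP: "card P \<le> card BF" unfolding P_def using finBF card_image_le by blast
  have spPS: "span P \<subseteq> S" using span_minimal[OF PS sub] .
  have "S \<subseteq> span (BK \<union> P)"
  proof
    fix x assume x: "x \<in> S"
    have "f x \<in> span BF" using x BF(3) by blast
    then have "f x \<in> f ` span P" using fP L.span_image[of P] by simp
    then obtain y where y0: "y \<in> span P" "f x = f y" by (rule imageE)
    have y: "y \<in> span P" "f y = f x" using y0 by auto
    have "x - y \<in> K" using x y spPS sub K_def L.diff subspace_diff by auto
    then have "x - y \<in> span (BK \<union> P)" using BK(3) span_mono[of BK "BK \<union> P"] by blast
    moreover have "y \<in> span (BK \<union> P)" using y(1) span_mono[of P "BK \<union> P"] by blast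
    ultimately have "(x - y) + y \<in> span (BK \<union> P)" by (rule span_add)
    then show "x \<in> span (BK \<union> P)" by simp
  qed
  then have "dim S \<le> card (BK \<union> P)" using dim_le_card finBK finBF P_def by blast
  also have "\<dots> \<le> card BK + card P" by (rule card_Un_le)
  finally have le1: "dim S \<le> dim K + dim (f ` S)" using BK(4) BF(4) cardP by linarith
  obtain B where B: "BK \<subseteq> B" "B \<subseteq> S" "independent B" "S \<subseteq> span B"
    using maximal_independent_subset_extend[of BK S] BK(1,2) K_def by auto
  have finB: "finite B" using independent_span_bound[OF fin(2) B(3)] B(2) fin(1) by blast
  have cardB: "card B = dim S" using basis_card_eq_dim B by blast
  have "f ` B \<subseteq> insert 0 (f ` (B - BK))" using BK(1) K_def by auto
  then have "span (f ` B) \<subseteq> span (f ` (B - BK))"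
    by (metis span_insert_0 span_mono)
  moreover have "f ` S \<subseteq> span (f ` B)" using B(4) L.span_image by blast
  ultimately have "dim (f ` S) \<le> card (f ` (B - BK))"
    using dim_le_card[of "f ` S" "f ` (B - BK)"] finB by blast
  also have "\<dots> \<le> card (B - BK)" using finB card_image_le by blast
  also have "\<dots> = card B - card BK" using finB B(1) by (meson card_Diff_subset finite_subset)
  finally have "dim K + dim (f ` S) \<le> dim S" using cardB BK(4)
    using card_mono[OF finB B(1)] by linarith
  with le1 show ?thesis unfolding K_def by linarith
qed

lemma dim_inj_image:
  assumes lin: "Vector_Spaces.linear scale scale f" and sub: "subspace S" and fin: "S \<subseteq> span W" "finite W"
    and inj: "\<And>x. x \<in> S \<Longrightarrow> f x = 0 \<Longrightarrow> x = 0"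
  shows "dim (f ` S) = dim S"
proof -
  have "dim {x\<in>S. f x = 0} = 0" by (rule dim_zero) (use inj in auto)
  then show ?thesis using rank_nullity[OF assms(1-4)] by simp
qed

lemma homology_ineq:
  assumes Ck: "subspace Ck" "Ck \<subseteq> span W0" "finite W0"
    and Ck1: "subspace Ck1" "Ck1 \<subseteq> span W1" "finite W1"
    and d0: "Vector_Spaces.linear scale scale d0" and d1: "Vector_Spaces.linear scale scale d1"
    and p: "Vector_Spaces.linear scale scale p"
    and pC0: "\<And>c. c \<in> Ck \<Longrightarrow> p c \<in> Ck" and pC1: "\<And>c. c \<in> Ck1 \<Longrightarrow> p c \<in> Ck1"
    and pp: "\<And>c. p (p c) = p c"
    and sub0: "\<And>a. a \<in> Ck \<Longrightarrow> p a = 0 \<Longrightarrow> p (d0 a) = 0"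
    and sub1: "\<And>a. a \<in> Ck1 \<Longrightarrow> p a = 0 \<Longrightarrow> p (d1 a) = 0"
  shows "dim {c\<in>Ck. d0 c = 0} - dim (d1 ` Ck1) \<le>
     (dim {c\<in>Ck. p c = 0 \<and> d0 c = 0} - dim (d1 ` {c\<in>Ck1. p c = 0}))
   + (dim {c\<in>Ck. p c = c \<and> p (d0 c) = 0} - dim ((\<lambda>c. p (d1 c)) ` {c\<in>Ck1. p c = c}))"
proof -
  interpret L0: Vector_Spaces.linear scale scale d0 by fact
  interpret L1: Vector_Spaces.linear scale scale d1 by fact
  interpret P: Vector_Spaces.linear scale scale p by fact
  define ZC where "ZC = {c\<in>Ck. d0 c = 0}"
  define ZA where "ZA = {c\<in>Ck. p c = 0 \<and> d0 c = 0}"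
  define ZQ where "ZQ = {c\<in>Ck. p c = c \<and> p (d0 c) = 0}"
  define BC where "BC = d1 ` Ck1"
  define BA where "BA = d1 ` {c\<in>Ck1. p c = 0}"
  define BQ where "BQ = (\<lambda>c. p (d1 c)) ` {c\<in>Ck1. p c = c}"
  have ZCeq: "ZC = Ck \<inter> {x. d0 x = 0}" unfolding ZC_def by auto
  have subZC: "subspace ZC" unfolding ZCeq by (rule subspace_inter[OF Ck(1) L0.subspace_kernel])
  have ZCsp: "ZC \<subseteq> span W0" using Ck(2) ZC_def by auto
  have rn1: "dim ZC = dim {x\<in>ZC. p x = 0} + dim (p ` ZC)"
    by (rule rank_nullity[OF p subZC ZCsp Ck(3)])
  have "{x\<in>ZC. p x = 0} = ZA" unfolding ZC_def ZA_def by auto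
  moreover have "p ` ZC \<subseteq> ZQ"
  proof
    fix y assume "y \<in> p ` ZC"
    then obtain z where z: "z \<in> ZC" "y = p z" by blast
    have zC: "z \<in> Ck" "d0 z = 0" using z ZC_def by auto
    have aC: "z - p z \<in> Ck" using subspace_diff[OF Ck(1) zC(1) pC0[OF zC(1)]] .
    have pa: "p (z - p z) = 0" using P.diff pp by simp
    have "d0 (p z) = - d0 (z - p z)" using L0.diff zC(2) by simp
    then have "p (d0 (p z)) = - p (d0 (z - p z))" using P.neg by simp
    also have "\<dots> = 0" using sub0[OF aC pa] by simp
    finally show "y \<in> ZQ" unfolding ZQ_def using z pC0[OF zC(1)] pp by auto
  qed
  then have "dim (p ` ZC) \<le> dim ZQ" using dim_le_sub[of "p ` ZC" ZQ W0] Ck(2,3) ZQ_def by auto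
  ultimately have Z: "dim ZC \<le> dim ZA + dim ZQ" using rn1 by simp
  have subBC: "subspace BC" unfolding BC_def by (rule L1.subspace_image[OF Ck1(1)])
  have BCsp: "BC \<subseteq> span (d1 ` W1)" unfolding BC_def using Ck1(2) L1.span_image by blast
  have rn2: "dim BC = dim {x\<in>BC. p x = 0} + dim (p ` BC)"
    by (rule rank_nullity[OF p subBC BCsp]) (use Ck1(3) in simp)
  have "BA \<subseteq> {x\<in>BC. p x = 0}" unfolding BA_def BC_def using sub1 by auto
  then have dBA: "dim BA \<le> dim {x\<in>BC. p x = 0}"
    using dim_le_sub[of BA "{x\<in>BC. p x = 0}" "d1 ` W1"] BCsp Ck1(3) by auto
  have "p ` BC = BQ"
  proof
    show "p ` BC \<subseteq> BQ"
    proof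
      fix y assume "y \<in> p ` BC"
      then obtain c where c: "c \<in> Ck1" "y = p (d1 c)" unfolding BC_def by blast
      have aC: "c - p c \<in> Ck1" using subspace_diff[OF Ck1(1) c(1) pC1[OF c(1)]] .
      have pa: "p (c - p c) = 0" using P.diff pp by simp
      have "d1 c = d1 (p c) + d1 (c - p c)" using L1.add[of "p c" "c - p c"] by simp
      then have "p (d1 c) = p (d1 (p c)) + p (d1 (c - p c))" using P.add by simp
      also have "\<dots> = p (d1 (p c))" using sub1[OF aC pa] by simp
      finally show "y \<in> BQ" unfolding BQ_def using c pC1[OF c(1)] pp by auto
    qed
    show "BQ \<subseteq> p ` BC" unfolding BQ_def BC_def by auto
  qed
  with rn2 dBA have B: "dim BA + dim BQ \<le> dim BC" by simp
  from Z B show ?thesis unfolding ZC_def ZA_def ZQ_def BC_def BA_def BQ_def by linarith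
qed

lemma subspace_ker_in:
  assumes "Vector_Spaces.linear scale scale f" "subspace S"
  shows "subspace {x\<in>S. f x = 0}"
proof -
  interpret L: Vector_Spaces.linear scale scale f by fact
  have "{x\<in>S. f x = 0} = S \<inter> {x. f x = 0}" by auto
  then show ?thesis using subspace_inter[OF assms(2) L.subspace_kernel] by simp
qed

lemma subspace_img:
  assumes "Vector_Spaces.linear scale scale f" "subspace S"
  shows "subspace (f ` S)"
proof -
  interpret L: Vector_Spaces.linear scale scale f by fact
  show ?thesis by (rule L.subspace_image[OF assms(2)])
qed

lemma span_img:
  assumes "Vector_Spaces.linear scale scale f"
  shows "f ` span S = span (f ` S)"
proof -
  interpret L: Vector_Spaces.linear scale scale f by fact
  show ?thesis by (rule L.span_image[symmetric])
qed

end




definition del :: "nat graph \<Rightarrow> nat set \<Rightarrow> nat graph" where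
  "del G X = (fst G - X, \<lambda>x y. snd G x y \<and> x \<notin> X \<and> y \<notin> X)"

definition nbhd :: "nat graph \<Rightarrow> nat \<Rightarrow> nat set" where
  "nbhd G v = insert v {u. snd G v u}"

definition pv :: "nat \<Rightarrow> (nat set \<Rightarrow> 'k::field) \<Rightarrow> (nat set \<Rightarrow> 'k)" where
  "pv v c = (\<lambda>\<sigma>. if v \<in> \<sigma> then c \<sigma> else 0)"

definition sg :: "nat \<Rightarrow> nat set \<Rightarrow> 'k::field" where
  "sg v \<rho> = (-1) ^ card {u\<in>\<rho>. u < v}"

definition psi :: "nat \<Rightarrow> (nat set \<Rightarrow> 'k::field) \<Rightarrow> (nat set \<Rightarrow> 'k)" where
  "psi v c = (\<lambda>\<sigma>. if v \<in> \<sigma> then sg v (\<sigma> - {v}) * c (\<sigma> - {v}) else 0)"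

definition ee :: "nat set \<Rightarrow> (nat set \<Rightarrow> 'k::field)" where
  "ee \<sigma> = (\<lambda>\<tau>. if \<tau> = \<sigma> then 1 else 0)"

lemma fst_del [simp]: "fst (del G X) = fst G - X" by (simp add: del_def)
lemma snd_del [simp]: "snd (del G X) x y \<longleftrightarrow> snd G x y \<and> x \<notin> X \<and> y \<notin> X" by (simp add: del_def)

lemma del_del: "del (del G X) Y = del G (X \<union> Y)"
  by (auto simp: del_def)

lemma ind_faces_del: "\<sigma> \<in> ind_faces (del G X) \<longleftrightarrow> \<sigma> \<in> ind_faces G \<and> \<sigma> \<inter> X = {}"
  unfolding ind_faces_def by auto

lemma simple_del: "simple_graph G \<Longrightarrow> simple_graph (del G X)"
  unfolding simple_graph_def by auto

lemma sum_fun_apply: "finite A \<Longrightarrow> (\<Sum>a\<in>A. f a) x = (\<Sum>a\<in>A. f a x)"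
  by (induction rule: finite_induct) auto

lemma chains_sub: "vs.subspace (chains K G k)"
  unfolding vs.subspace_def chains_def fscale_def
proof (intro conjI ballI allI, goal_cases)
  case 1 then show ?case by simp
next
  case (2 x y)
  show ?case
  proof (intro CollectI allI impI)
    fix \<sigma> assume "(x + y) \<sigma> \<noteq> 0"
    then have "x \<sigma> \<noteq> 0 \<or> y \<sigma> \<noteq> 0" by auto
    then show "\<sigma> \<in> ind_faces G \<and> card \<sigma> = k" using 2 by auto
  qed
next
  case (3 c x) then show ?case by auto
qed

lemma chains_span:
  fixes K :: "'k::field itself"
  assumes "finite (fst G)"
  shows "chains K G k \<subseteq> vs.span (ee ` Pow (fst G))"
proof
  fix c :: "nat set \<Rightarrow> 'k" assume c: "c \<in> chains K G k"
  have fin: "finite (Pow (fst G))" using assms by simp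
  have "c = (\<Sum>\<sigma>\<in>Pow (fst G). fscale (c \<sigma>) (ee \<sigma>))"
  proof
    fix \<tau>
    have "(\<Sum>\<sigma>\<in>Pow (fst G). fscale (c \<sigma>) (ee \<sigma>)) \<tau> = (\<Sum>\<sigma>\<in>Pow (fst G). (if \<tau> = \<sigma> then c \<sigma> else 0))"
      unfolding sum_fun_apply[OF fin] fscale_def ee_def by (rule sum.cong) auto
    also have "\<dots> = (if \<tau> \<in> Pow (fst G) then c \<tau> else 0)"
      using fin by (simp add: sum.delta)
    also have "\<dots> = c \<tau>" using c by (auto simp: chains_def ind_faces_def)
    finally show "c \<tau> = (\<Sum>\<sigma>\<in>Pow (fst G). fscale (c \<sigma>) (ee \<sigma>)) \<tau>" by simp
  qed
  also have "\<dots> \<in> vs.span (ee ` Pow (fst G))"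
    by (intro vs.span_sum vs.span_scale vs.span_base) auto
  finally show "c \<in> vs.span (ee ` Pow (fst G))" .
qed

lemma bd_linear: "Vector_Spaces.linear fscale fscale (bd G k)"
  unfolding Vector_Spaces.linear_iff
  by (auto simp: fscale_vs bd_def fun_eq_iff fscale_def sum.distrib sum_distrib_left algebra_simps)

lemma pv_linear: "Vector_Spaces.linear fscale fscale (pv v)"
  unfolding Vector_Spaces.linear_iff
  by (auto simp: fscale_vs pv_def fun_eq_iff fscale_def)

lemma psi_linear: "Vector_Spaces.linear fscale fscale (psi v)"
  unfolding Vector_Spaces.linear_iff
  by (auto simp: fscale_vs psi_def fun_eq_iff fscale_def algebra_simps)

lemma bd_supp: "bd G k c \<tau> \<noteq> 0 \<Longrightarrow> k \<noteq> 0 \<and> \<tau> \<in> ind_faces G \<and> card \<tau> = k - 1"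
  by (auto simp: bd_def split: if_splits)

lemma pv_pv [simp]: "pv v (pv v c) = pv v c" by (simp add: pv_def fun_eq_iff)




lemma chains_del_v: "chains K (del G {v}) k = {c \<in> chains K G k. pv v c = 0}"
  unfolding chains_def pv_def by (auto simp: ind_faces_del fun_eq_iff)

lemma bd_del_v:
  assumes G: "simple_graph G" and c: "c \<in> chains K (del G {v}) k"
  shows "bd G k c = bd (del G {v}) k c"
proof
  fix \<tau>
  have fin: "finite (fst G)" using G unfolding simple_graph_def by auto
  have cz: "c \<sigma> = 0" if "v \<in> \<sigma>" for \<sigma> using c that by (auto simp: chains_def ind_faces_del)
  show "bd G k c \<tau> = bd (del G {v}) k c \<tau>"
  proof (cases "k = 0 \<or> \<not> (\<tau> \<in> ind_faces G \<and> card \<tau> = k - 1)")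
    case True then show ?thesis by (auto simp: bd_def ind_faces_del)
  next
    case False
    then have k: "k \<noteq> 0" and t: "\<tau> \<in> ind_faces G" "card \<tau> = k - 1" by auto
    show ?thesis
    proof (cases "v \<in> \<tau>")
      case True
      then have "bd G k c \<tau> = 0" using cz by (simp add: bd_def)
      moreover have "bd (del G {v}) k c \<tau> = 0" using True by (simp add: bd_def ind_faces_del)
      ultimately show ?thesis by simp
    next
      case False
      have "(\<Sum>w\<in>fst G - \<tau>. (-1) ^ card {u\<in>\<tau>. u < w} * c (insert w \<tau>)) =
            (\<Sum>w\<in>(fst G - {v}) - \<tau>. (-1) ^ card {u\<in>\<tau>. u < w} * c (insert w \<tau>))"
        by (rule sum.mono_neutral_right) (use fin cz in auto)
      then show ?thesis using False k t by (simp add: bd_def ind_faces_del)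
    qed
  qed
qed

lemma faces_G2:
  "\<rho> \<in> ind_faces (del G (nbhd G v)) \<longleftrightarrow> \<rho> \<in> ind_faces G \<and> v \<notin> \<rho> \<and> (\<forall>u\<in>\<rho>. \<not> snd G v u)"
  by (auto simp: ind_faces_del nbhd_def)

lemma insert_face:
  assumes G: "simple_graph G" and v: "v \<in> fst G"
    and r: "\<rho> \<in> ind_faces G" "\<forall>u\<in>\<rho>. \<not> snd G v u"
  shows "insert v \<rho> \<in> ind_faces G"
proof -
  have sym: "\<And>x y. snd G x y \<Longrightarrow> snd G y x" and irr: "\<And>x. \<not> snd G x x"
    using G unfolding simple_graph_def by blast+
  have rs: "\<rho> \<subseteq> fst G" and ri: "\<forall>x\<in>\<rho>. \<forall>y\<in>\<rho>. \<not> snd G x y" using r(1) unfolding ind_faces_def by auto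
  show ?thesis unfolding ind_faces_def
  proof (intro CollectI conjI ballI)
    show "insert v \<rho> \<subseteq> fst G" using rs v by simp
    fix x y assume x: "x \<in> insert v \<rho>" and y: "y \<in> insert v \<rho>"
    show "\<not> snd G x y"
    proof
      assume e: "snd G x y"
      consider "x = v" "y = v" | "x = v" "y \<in> \<rho>" | "x \<in> \<rho>" "y = v" | "x \<in> \<rho>" "y \<in> \<rho>"
        using x y by blast
      then show False
      proof cases
        case 1 then show ?thesis using e irr by simp
      next
        case 2 then show ?thesis using e r(2) by simp
      next
        case 3 then show ?thesis using sym[OF e] r(2) by simp
      next
        case 4 then show ?thesis using e ri by blast
      qed
    qed
  qed
qed

lemma face_remove_v:
  assumes G: "simple_graph G" and t: "\<tau> \<in> ind_faces G" "v \<in> \<tau>"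
  shows "\<tau> - {v} \<in> ind_faces (del G (nbhd G v))"
  using t unfolding faces_G2 ind_faces_def nbhd_def by auto

lemma faces_finite: "simple_graph G \<Longrightarrow> \<sigma> \<in> ind_faces G \<Longrightarrow> finite \<sigma>"
  unfolding simple_graph_def ind_faces_def by (auto intro: finite_subset)

lemma psi_chain:
  assumes G: "simple_graph G" and v: "v \<in> fst G" and k: "k \<ge> 1"
    and c: "c \<in> chains K (del G (nbhd G v)) (k - 1)"
  shows "psi v c \<in> chains K G k" "pv v (psi v c) = psi v c"
proof -
  show "pv v (psi v c) = psi v c" by (simp add: pv_def psi_def fun_eq_iff)
  show "psi v c \<in> chains K G k"
    unfolding chains_def
  proof (intro CollectI allI impI)
    fix \<sigma> assume ne: "psi v c \<sigma> \<noteq> 0"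
    have vs: "v \<in> \<sigma>" using ne unfolding psi_def by (cases "v \<in> \<sigma>") auto
    have cn: "c (\<sigma> - {v}) \<noteq> 0" using ne vs unfolding psi_def by auto
    then have f2: "\<sigma> - {v} \<in> ind_faces (del G (nbhd G v))" and cd: "card (\<sigma> - {v}) = k - 1"
      using c by (auto simp: chains_def)
    then have "\<sigma> - {v} \<in> ind_faces G \<and> (\<forall>u\<in>\<sigma> - {v}. \<not> snd G v u)" unfolding faces_G2 by simp
    then have "insert v (\<sigma> - {v}) \<in> ind_faces G" using insert_face[OF G v] by blast
    then have sf: "\<sigma> \<in> ind_faces G" using vs by (simp add: insert_absorb)
    have "finite \<sigma>" using faces_finite[OF G sf] .
    then have "card \<sigma> = card (\<sigma> - {v}) + 1" using card.remove[of \<sigma> v] vs by simp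
    then show "\<sigma> \<in> ind_faces G \<and> card \<sigma> = k" using sf cd k by simp
  qed
qed

lemma sg_sq: "sg v \<rho> * sg v \<rho> = (1::'k::field)"
  unfolding sg_def by (simp add: power_mult_distrib[symmetric])

lemma psi_surj:
  assumes G: "simple_graph G" and v: "v \<in> fst G" and k: "k \<ge> 1"
    and b: "b \<in> chains K G k" "pv v b = b"
  shows "\<exists>c \<in> chains K (del G (nbhd G v)) (k - 1). b = psi v c"
proof -
  define c where "c = (\<lambda>\<rho>. if v \<notin> \<rho> then sg v \<rho> * b (insert v \<rho>) else 0)"
  have bz: "b \<sigma> = 0" if "v \<notin> \<sigma>" for \<sigma> using b(2) that by (metis pv_def)
  have "c \<in> chains K (del G (nbhd G v)) (k - 1)"
    unfolding chains_def
  proof (intro CollectI allI impI)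
    fix \<rho> assume "c \<rho> \<noteq> 0"
    then have vr: "v \<notin> \<rho>" and bn: "b (insert v \<rho>) \<noteq> 0" by (auto simp: c_def split: if_splits)
    then have fi: "insert v \<rho> \<in> ind_faces G" and ci: "card (insert v \<rho>) = k" using b(1) by (auto simp: chains_def)
    have "\<rho> \<in> ind_faces (del G (nbhd G v))" using face_remove_v[OF G fi insertI1] vr by simp
    moreover have "finite \<rho>" using faces_finite[OF G fi] by simp
    ultimately show "\<rho> \<in> ind_faces (del G (nbhd G v)) \<and> card \<rho> = k - 1" using ci vr by simp
  qed
  moreover have "b = psi v c"
  proof
    fix \<sigma>
    show "b \<sigma> = psi v c \<sigma>"
    proof (cases "v \<in> \<sigma>")
      case True
      then have "psi v c \<sigma> = sg v (\<sigma> - {v}) * sg v (\<sigma> - {v}) * b \<sigma>"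
        by (simp add: psi_def c_def insert_absorb mult.assoc)
      then show ?thesis by (simp add: sg_sq)
    next
      case False then show ?thesis by (simp add: psi_def bz)
    qed
  qed
  ultimately show ?thesis by blast
qed

lemma psi_inj:
  assumes "\<And>\<sigma>. x \<sigma> \<noteq> 0 \<Longrightarrow> v \<notin> \<sigma>" and "psi v x = 0"
  shows "x = 0"
proof
  fix \<rho>
  show "x \<rho> = 0 \<rho>"
  proof (cases "v \<in> \<rho>")
    case True then show ?thesis using assms(1) by auto
  next
    case False
    have "psi v x (insert v \<rho>) = 0" using assms(2) by simp
    then have "sg v \<rho> * x \<rho> = 0" using False by (simp add: psi_def)
    moreover have "sg v \<rho> \<noteq> (0::'a)" by (simp add: sg_def)
    ultimately show ?thesis by simp
  qed
qed




lemma card_insert_filter: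
  assumes "finite \<rho>" "a \<notin> \<rho>"
  shows "card {u \<in> insert a \<rho>. P u} = card {u\<in>\<rho>. P u} + (if P a then 1 else 0)"
proof -
  have "{u \<in> insert a \<rho>. P u} = (if P a then insert a {u\<in>\<rho>. P u} else {u\<in>\<rho>. P u})" by auto
  then show ?thesis using assms by simp
qed

lemma bd_psi:
  fixes K :: "'k::field itself"
  assumes G: "simple_graph G" and v: "v \<in> fst G" and k: "k \<ge> 1"
    and c: "c \<in> chains K (del G (nbhd G v)) (k - 1)"
  shows "pv v (bd G k (psi v c)) = - psi v (bd (del G (nbhd G v)) (k - 1) c)"
proof
  fix \<tau>
  define G2 where "G2 = del G (nbhd G v)"
  have finV: "finite (fst G)" using G unfolding simple_graph_def by auto
  have c2: "c \<sigma> = 0" if "\<not> (\<sigma> \<in> ind_faces G2 \<and> card \<sigma> = k - 1)" for \<sigma>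
    using c that unfolding G2_def chains_def by auto
  show "pv v (bd G k (psi v c)) \<tau> = (- psi v (bd (del G (nbhd G v)) (k - 1) c)) \<tau>"
  proof (cases "v \<in> \<tau>")
    case False then show ?thesis by (simp add: pv_def psi_def)
  next
    case True
    define \<rho> where "\<rho> = \<tau> - {v}"
    have teq: "\<tau> = insert v \<rho>" and vr: "v \<notin> \<rho>" using True \<rho>_def by auto
    have L: "pv v (bd G k (psi v c)) \<tau> = bd G k (psi v c) \<tau>" using True by (simp add: pv_def)
    have R: "(- psi v (bd G2 (k - 1) c)) \<tau> = - (sg v \<rho> * bd G2 (k - 1) c \<rho>)"
      using True by (simp add: psi_def \<rho>_def)
    show ?thesis
    proof (cases "\<tau> \<in> ind_faces G \<and> card \<tau> = k - 1")
      case False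
      have "bd G k (psi v c) \<tau> = 0" using False unfolding bd_def by auto
      moreover have "bd G2 (k - 1) c \<rho> = 0"
      proof (rule ccontr)
        assume "bd G2 (k - 1) c \<rho> \<noteq> 0"
        then have h: "k - 1 \<noteq> 0" "\<rho> \<in> ind_faces G2" "card \<rho> = k - 1 - 1" using bd_supp by blast+
        then have "\<rho> \<in> ind_faces G \<and> (\<forall>u\<in>\<rho>. \<not> snd G v u)" unfolding G2_def faces_G2 by simp
        then have ti: "\<tau> \<in> ind_faces G" using insert_face[OF G v] teq by blast
        then have "finite \<rho>" using faces_finite[OF G ti] teq by simp
        then have "card \<tau> = k - 1" using teq vr h by simp
        then show False using False ti by simp
      qed
      ultimately show ?thesis using L R G2_def by simp
    next
      case True2: True
      have ti: "\<tau> \<in> ind_faces G" and ct: "card \<tau> = k - 1" using True2 by auto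
      have fint: "finite \<tau>" using faces_finite[OF G ti] .
      have finr: "finite \<rho>" using fint \<rho>_def by simp
      have k2: "k - 1 \<noteq> 0" using ct fint True by (metis card_0_eq empty_iff)
      have rf: "\<rho> \<in> ind_faces G2" unfolding G2_def \<rho>_def by (rule face_remove_v[OF G ti True])
      have cr: "card \<rho> = k - 1 - 1" using ct teq vr finr by simp
      have bd2: "bd G2 (k - 1) c \<rho> = (\<Sum>w\<in>fst G2 - \<rho>. (-1) ^ card {u\<in>\<rho>. u < w} * c (insert w \<rho>))"
        using k2 rf cr by (simp add: bd_def)
      have Nv: "v \<in> nbhd G v" by (simp add: nbhd_def)
      have "bd G k (psi v c) \<tau> = (\<Sum>w\<in>fst G - \<tau>. (-1) ^ card {u\<in>\<tau>. u < w} * psi v c (insert w \<tau>))"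
        using ti ct k by (simp add: bd_def)
      also have "\<dots> = (\<Sum>w\<in>fst G2 - \<rho>. (-1) ^ card {u\<in>\<tau>. u < w} * psi v c (insert w \<tau>))"
      proof (rule sum.mono_neutral_right)
        show "finite (fst G - \<tau>)" using finV by simp
        show "fst G2 - \<rho> \<subseteq> fst G - \<tau>" using Nv teq unfolding G2_def by auto
        show "\<forall>w\<in>fst G - \<tau> - (fst G2 - \<rho>). (-1) ^ card {u\<in>\<tau>. u < w} * psi v c (insert w \<tau>) = 0"
        proof
          fix w assume w: "w \<in> fst G - \<tau> - (fst G2 - \<rho>)"
          then have wN: "w \<in> nbhd G v" and wv: "w \<noteq> v" and wr: "w \<notin> \<rho>"
            using teq True unfolding G2_def by auto
          have "insert w \<tau> - {v} = insert w \<rho>" using teq wv vr by auto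
          moreover have "insert w \<rho> \<notin> ind_faces G2" using wN unfolding G2_def ind_faces_del by auto
          ultimately have "psi v c (insert w \<tau>) = 0" using c2 by (simp add: psi_def)
          then show "(-1) ^ card {u\<in>\<tau>. u < w} * psi v c (insert w \<tau>) = 0" by simp
        qed
      qed
      also have "\<dots> = (\<Sum>w\<in>fst G2 - \<rho>. - (sg v \<rho> * ((-1) ^ card {u\<in>\<rho>. u < w} * c (insert w \<rho>))))"
      proof (rule sum.cong)
        fix w assume w: "w \<in> fst G2 - \<rho>"
        then have wv: "w \<noteq> v" and wr: "w \<notin> \<rho>" using Nv unfolding G2_def by auto
        have e1: "insert w \<tau> - {v} = insert w \<rho>" using teq wv vr by auto
        have c1: "card {u\<in>\<tau>. u < w} = card {u\<in>\<rho>. u < w} + (if v < w then 1 else 0)"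
          using card_insert_filter[OF finr vr] teq by simp
        have c3: "card {u\<in>insert w \<rho>. u < v} = card {u\<in>\<rho>. u < v} + (if w < v then 1 else 0)"
          using card_insert_filter[OF finr wr] by simp
        have "psi v c (insert w \<tau>) = sg v (insert w \<rho>) * c (insert w \<rho>)"
          using e1 True by (simp add: psi_def)
        then show "(-1) ^ card {u\<in>\<tau>. u < w} * psi v c (insert w \<tau>) =
              - (sg v \<rho> * ((-1) ^ card {u\<in>\<rho>. u < w} * c (insert w \<rho>)))"
          using wv c1 c3 unfolding sg_def
          by (cases "v < w") (auto simp: power_add algebra_simps)
      qed simp
      also have "\<dots> = - (sg v \<rho> * bd G2 (k - 1) c \<rho>)"
        unfolding bd2 by (simp add: sum_negf sum_distrib_left)
      finally show ?thesis using L R G2_def by simp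
    qed
  qed
qed




lemma psi_zero [simp]: "psi v 0 = 0" by (simp add: psi_def fun_eq_iff)

lemma pv_chain: "c \<in> chains K G k \<Longrightarrow> pv v c \<in> chains K G k"
  unfolding chains_def pv_def by auto

lemma bd_chain_avoid:
  assumes "bd (del G X) k c \<tau> \<noteq> 0" shows "\<tau> \<inter> X = {}"
  using bd_supp[OF assms] ind_faces_del by blast

lemma betti_ineq:
  fixes K :: "'k::field itself"
  assumes G: "simple_graph G" and v: "v \<in> fst G"
  shows "red_betti K G k \<le> red_betti K (del G {v}) k +
           (if k = 0 then 0 else red_betti K (del G (nbhd G v)) (k - 1))"
proof -
  define G1 where "G1 = del G {v}"
  define G2 where "G2 = del G (nbhd G v)"
  have finV: "finite (fst G)" using G unfolding simple_graph_def by auto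
  have G2s: "simple_graph G2" unfolding G2_def by (rule simple_del[OF G])
  have finV2: "finite (fst G2)" using G2s unfolding simple_graph_def by auto
  define W :: "(nat set \<Rightarrow> 'k) set" where "W = ee ` Pow (fst G)"
  have finW: "finite W" unfolding W_def using finV by simp
  have sp: "\<And>j. chains K G j \<subseteq> vs.span W" unfolding W_def by (rule chains_span[OF finV])
  have sub: "\<And>j a. a \<in> chains K G j \<Longrightarrow> pv v a = 0 \<Longrightarrow> pv v (bd G j a) = 0"
  proof -
    fix j a assume a: "a \<in> chains K G j" "pv v a = 0"
    then have a1: "a \<in> chains K G1 j" unfolding G1_def chains_del_v by simp
    have "bd G j a = bd G1 j a" unfolding G1_def by (rule bd_del_v[OF G a1[unfolded G1_def]])
    moreover have "bd G1 j a \<tau> = 0" if "v \<in> \<tau>" for \<tau>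
      using bd_chain_avoid[of G "{v}" j a \<tau>] that unfolding G1_def by auto
    ultimately show "pv v (bd G j a) = 0" by (auto simp: pv_def fun_eq_iff)
  qed
  have H: "vs.dim {c\<in>chains K G k. bd G k c = 0} - vs.dim (bd G (Suc k) ` chains K G (Suc k)) \<le>
     (vs.dim {c\<in>chains K G k. pv v c = 0 \<and> bd G k c = 0} - vs.dim (bd G (Suc k) ` {c\<in>chains K G (Suc k). pv v c = 0}))
   + (vs.dim {c\<in>chains K G k. pv v c = c \<and> pv v (bd G k c) = 0} - vs.dim ((\<lambda>c. pv v (bd G (Suc k) c)) ` {c\<in>chains K G (Suc k). pv v c = c}))"
    by (rule vs.homology_ineq[OF chains_sub sp finW chains_sub sp finW bd_linear bd_linear pv_linear
          pv_chain pv_chain pv_pv sub sub])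
  have ZA: "{c\<in>chains K G k. pv v c = 0 \<and> bd G k c = 0} = {c\<in>chains K G1 k. bd G1 k c = 0}"
  proof -
    have "c \<in> chains K G1 k \<Longrightarrow> bd G k c = bd G1 k c" for c
      unfolding G1_def by (rule bd_del_v[OF G])
    then show ?thesis unfolding G1_def chains_del_v by auto
  qed
  have BA: "bd G (Suc k) ` {c\<in>chains K G (Suc k). pv v c = 0} = bd G1 (Suc k) ` chains K G1 (Suc k)"
  proof -
    have e: "chains K G1 (Suc k) = {c\<in>chains K G (Suc k). pv v c = 0}" unfolding G1_def chains_del_v ..
    have "c \<in> chains K G1 (Suc k) \<Longrightarrow> bd G (Suc k) c = bd G1 (Suc k) c" for c
      unfolding G1_def by (rule bd_del_v[OF G])
    then show ?thesis unfolding e[symmetric] by (rule image_cong[OF refl])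
  qed
  have first: "vs.dim {c\<in>chains K G k. pv v c = 0 \<and> bd G k c = 0} - vs.dim (bd G (Suc k) ` {c\<in>chains K G (Suc k). pv v c = 0})
      = red_betti K G1 k"
    unfolding ZA BA red_betti_def kdim_eq by (simp add: zero_fun_def)
  have second: "vs.dim {c\<in>chains K G k. pv v c = c \<and> pv v (bd G k c) = 0} - vs.dim ((\<lambda>c. pv v (bd G (Suc k) c)) ` {c\<in>chains K G (Suc k). pv v c = c})
      \<le> (if k = 0 then 0 else red_betti K G2 (k - 1))"
  proof (cases "k = 0")
    case True
    have "{c\<in>chains K G k. pv v c = c \<and> pv v (bd G k c) = 0} \<subseteq> {0}"
    proof
      fix c assume c: "c \<in> {c\<in>chains K G k. pv v c = c \<and> pv v (bd G k c) = 0}"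
      have "c \<sigma> = 0" for \<sigma>
      proof (rule ccontr)
        assume ne: "c \<sigma> \<noteq> 0"
        then have "\<sigma> \<in> ind_faces G" "card \<sigma> = 0" using c True by (auto simp: chains_def)
        then have "\<sigma> = {}" using faces_finite[OF G] by auto
        then have "pv v c \<sigma> = 0" by (simp add: pv_def)
        then show False using c ne by simp
      qed
      then show "c \<in> {0}" by (simp add: fun_eq_iff)
    qed
    then have "vs.dim {c\<in>chains K G k. pv v c = c \<and> pv v (bd G k c) = 0} = 0" by (rule vs.dim_zero)
    then show ?thesis using True by simp
  next
    case False
    then have k: "k \<ge> 1" by simp
    define Z2 where "Z2 = {c\<in>chains K G2 (k - 1). bd G2 (k - 1) c = 0}"
    define B2 where "B2 = bd G2 k ` chains K G2 k"
    have W2sp: "\<And>j. chains K G2 j \<subseteq> vs.span (ee ` Pow (fst G2))" by (rule chains_span[OF finV2])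
    have finW2: "finite (ee ` Pow (fst G2) :: (nat set \<Rightarrow> 'k) set)" using finV2 by simp
    have avoid: "\<And>x \<sigma>. x \<in> chains K G2 j \<Longrightarrow> x \<sigma> \<noteq> 0 \<Longrightarrow> v \<notin> \<sigma>" for j
      unfolding chains_def G2_def ind_faces_del nbhd_def by auto
    have ZQ: "{c\<in>chains K G k. pv v c = c \<and> pv v (bd G k c) = 0} = psi v ` Z2"
    proof
      show "{c\<in>chains K G k. pv v c = c \<and> pv v (bd G k c) = 0} \<subseteq> psi v ` Z2"
      proof
        fix b assume b: "b \<in> {c\<in>chains K G k. pv v c = c \<and> pv v (bd G k c) = 0}"
        obtain c where c: "c \<in> chains K G2 (k - 1)" "b = psi v c"
          using psi_surj[OF G v k, of b K] b unfolding G2_def by auto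
        have "- psi v (bd G2 (k - 1) c) = 0" using bd_psi[OF G v k c(1)[unfolded G2_def]] b c(2)
          unfolding G2_def by simp
        then have "psi v (bd G2 (k - 1) c) = 0" by simp
        then have "bd G2 (k - 1) c = 0"
          by (rule psi_inj[rotated]) (use bd_chain_avoid[of G "nbhd G v"] in \<open>auto simp: G2_def nbhd_def\<close>)
        then show "b \<in> psi v ` Z2" using c unfolding Z2_def by auto
      qed
      show "psi v ` Z2 \<subseteq> {c\<in>chains K G k. pv v c = c \<and> pv v (bd G k c) = 0}"
      proof
        fix b assume "b \<in> psi v ` Z2"
        then obtain c where c: "c \<in> chains K G2 (k - 1)" "bd G2 (k - 1) c = 0" "b = psi v c"
          unfolding Z2_def by auto
        have "pv v (bd G k b) = 0" using bd_psi[OF G v k c(1)[unfolded G2_def]] c unfolding G2_def by simp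
        then show "b \<in> {c\<in>chains K G k. pv v c = c \<and> pv v (bd G k c) = 0}"
          using psi_chain[OF G v k c(1)[unfolded G2_def]] c(3) by simp
      qed
    qed
    have BQ: "(\<lambda>c. pv v (bd G (Suc k) c)) ` {c\<in>chains K G (Suc k). pv v c = c} = (\<lambda>x. - psi v x) ` B2"
    proof
      show "(\<lambda>c. pv v (bd G (Suc k) c)) ` {c\<in>chains K G (Suc k). pv v c = c} \<subseteq> (\<lambda>x. - psi v x) ` B2"
      proof
        fix y assume "y \<in> (\<lambda>c. pv v (bd G (Suc k) c)) ` {c\<in>chains K G (Suc k). pv v c = c}"
        then obtain b where b: "b \<in> chains K G (Suc k)" "pv v b = b" "y = pv v (bd G (Suc k) b)" by auto
        obtain c where c: "c \<in> chains K G2 k" "b = psi v c"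
          using psi_surj[OF G v _ b(1,2)] unfolding G2_def by auto
        have "y = - psi v (bd G2 k c)" using bd_psi[OF G v _ , of "Suc k" c K] c b(3) unfolding G2_def by simp
        then show "y \<in> (\<lambda>x. - psi v x) ` B2" using c unfolding B2_def by auto
      qed
      show "(\<lambda>x. - psi v x) ` B2 \<subseteq> (\<lambda>c. pv v (bd G (Suc k) c)) ` {c\<in>chains K G (Suc k). pv v c = c}"
      proof
        fix y assume "y \<in> (\<lambda>x. - psi v x) ` B2"
        then obtain c where c: "c \<in> chains K G2 k" "y = - psi v (bd G2 k c)" unfolding B2_def by auto
        have "y = pv v (bd G (Suc k) (psi v c))" using bd_psi[OF G v _ , of "Suc k" c K] c unfolding G2_def by simp
        moreover have "psi v c \<in> chains K G (Suc k)" "pv v (psi v c) = psi v c"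
          using psi_chain[OF G v _, of "Suc k" c K] c unfolding G2_def by auto
        ultimately show "y \<in> (\<lambda>c. pv v (bd G (Suc k) c)) ` {c\<in>chains K G (Suc k). pv v c = c}" by auto
      qed
    qed
    have subZ2: "vs.subspace Z2"
      unfolding Z2_def by (rule vs.subspace_ker_in[OF bd_linear chains_sub])
    have dZ: "vs.dim (psi v ` Z2) = vs.dim Z2"
    proof (rule vs.dim_inj_image[OF psi_linear subZ2 _ finW2])
      show "Z2 \<subseteq> vs.span (ee ` Pow (fst G2))" using W2sp unfolding Z2_def by blast
      fix x assume "x \<in> Z2" "psi v x = 0"
      then show "x = 0" using psi_inj[of x v] avoid[of x "k - 1"] unfolding Z2_def by blast
    qed
    have linneg: "Vector_Spaces.linear fscale fscale (\<lambda>x. - psi v x)"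
      using psi_linear[of v] unfolding Vector_Spaces.linear_iff by (auto simp: fscale_def fun_eq_iff)
    have subB2: "vs.subspace B2" unfolding B2_def
      by (rule vs.subspace_img[OF bd_linear chains_sub])
    have dB: "vs.dim ((\<lambda>x. - psi v x) ` B2) = vs.dim B2"
    proof (rule vs.dim_inj_image[OF linneg subB2 _ finite_imageI[OF finW2, of "bd G2 k"]])
      show "B2 \<subseteq> vs.span (bd G2 k ` ee ` Pow (fst G2))" unfolding B2_def
        using W2sp vs.span_img[OF bd_linear] by blast
      fix x assume x: "x \<in> B2" "- psi v x = 0"
      then have "psi v x = 0" by simp
      moreover have "x \<sigma> \<noteq> 0 \<Longrightarrow> v \<notin> \<sigma>" for \<sigma>
        using x(1) bd_chain_avoid[of G "nbhd G v" k _ \<sigma>] unfolding B2_def G2_def nbhd_def by auto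
      ultimately show "x = 0" using psi_inj by blast
    qed
    have "red_betti K G2 (k - 1) = vs.dim Z2 - vs.dim B2"
      unfolding red_betti_def kdim_eq Z2_def B2_def using k by (simp add: zero_fun_def)
    then show ?thesis unfolding ZQ BQ dZ dB using False by simp
  qed
  have "red_betti K G k = vs.dim {c\<in>chains K G k. bd G k c = 0} - vs.dim (bd G (Suc k) ` chains K G (Suc k))"
    unfolding red_betti_def kdim_eq by (simp add: zero_fun_def)
  with H first second show ?thesis unfolding G1_def G2_def by linarith
qed




lemma red_betti_zero:
  assumes G: "simple_graph G" and k: "card (fst G) < k"
  shows "red_betti K G k = 0"
proof -
  have fin: "finite (fst G)" using G unfolding simple_graph_def by auto
  have "chains K G k \<subseteq> {0}"
  proof
    fix c assume c: "c \<in> chains K G k"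
    have "c \<sigma> = 0" for \<sigma>
    proof (rule ccontr)
      assume "c \<sigma> \<noteq> 0"
      then have s: "\<sigma> \<subseteq> fst G" "card \<sigma> = k" using c by (auto simp: chains_def ind_faces_def)
      have "card \<sigma> \<le> card (fst G)" by (rule card_mono[OF fin s(1)])
      then show False using s(2) k by simp
    qed
    then show "c \<in> {0}" by (simp add: fun_eq_iff)
  qed
  then have "kdim {c \<in> chains K G k. bd G k c = (\<lambda>_. 0)} = 0"
    unfolding kdim_eq by (intro vs.dim_zero) auto
  then show ?thesis unfolding red_betti_def by simp
qed

lemma btilde_ext:
  assumes G: "simple_graph G" and n: "card (fst G) \<le> n"
  shows "btilde K G = (\<Sum>k\<in>{0..n}. red_betti K G k)"
  unfolding btilde_def
proof (rule sum.mono_neutral_left)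
  show "finite {0..n}" by simp
  show "{0..card (fst G)} \<subseteq> {0..n}" using n by auto
  show "\<forall>i\<in>{0..n} - {0..card (fst G)}. red_betti K G i = 0"
  proof
    fix i assume "i \<in> {0..n} - {0..card (fst G)}"
    then have "card (fst G) < i" by auto
    then show "red_betti K G i = 0" by (rule red_betti_zero[OF G])
  qed
qed

lemma btilde_del:
  fixes K :: "'k::field itself"
  assumes G: "simple_graph G" and v: "v \<in> fst G"
  shows "btilde K G \<le> btilde K (del G {v}) + btilde K (del G (nbhd G v))"
proof -
  have fin: "finite (fst G)" using G unfolding simple_graph_def by auto
  define m where "m = card (fst G)"
  have "0 < m" unfolding m_def using fin v card_gt_0_iff by blast
  then obtain m' where m': "m = Suc m'" by (cases m) auto
  define f where "f k = (if k = 0 then 0 else red_betti K (del G (nbhd G v)) (k - 1))" for k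
  have "btilde K G = (\<Sum>k\<in>{0..m}. red_betti K G k)" unfolding m_def btilde_def ..
  also have "\<dots> \<le> (\<Sum>k\<in>{0..m}. red_betti K (del G {v}) k + f k)"
    unfolding f_def by (rule sum_mono) (rule betti_ineq[OF G v])
  also have "\<dots> = (\<Sum>k\<in>{0..m}. red_betti K (del G {v}) k) + (\<Sum>k\<in>{0..m}. f k)"
    by (rule sum.distrib)
  also have "(\<Sum>k\<in>{0..m}. red_betti K (del G {v}) k) = btilde K (del G {v})"
    by (rule btilde_ext[symmetric, OF simple_del[OF G]]) (use fin m_def in \<open>simp add: card_Diff_subset_Int le_diff_conv\<close>)
  also have "(\<Sum>k\<in>{0..m}. f k) = (\<Sum>k\<in>{0..m'}. red_betti K (del G (nbhd G v)) k)"
    unfolding m' atLeast0AtMost sum.atMost_Suc_shift by (simp add: f_def)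
  also have "\<dots> = btilde K (del G (nbhd G v))"
  proof (rule btilde_ext[symmetric, OF simple_del[OF G]])
    have "fst G - nbhd G v \<subseteq> fst G - {v}" by (auto simp: nbhd_def)
    then have "card (fst G - nbhd G v) \<le> card (fst G - {v})" using fin by (intro card_mono) auto
    also have "\<dots> = m'" using fin v m_def m' by simp
    finally show "card (fst (del G (nbhd G v))) \<le> m'" by simp
  qed
  finally show ?thesis .
qed




lemma del_empty: "del G {} = G" by (simp add: del_def)

lemma del_outside:
  assumes G: "simple_graph G" and u: "u \<notin> fst G"
  shows "del G (insert u X) = del G X"
proof -
  have "snd G x y \<Longrightarrow> x \<noteq> u \<and> y \<noteq> u" for x y using G u unfolding simple_graph_def by blast
  then show ?thesis unfolding del_def using u by (auto simp: fun_eq_iff)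
qed

lemma btilde_iter:
  fixes K :: "'k::field itself"
  assumes "finite T"
  shows "simple_graph G \<Longrightarrow> (\<And>X. T \<subseteq> X \<Longrightarrow> btilde K (del G X) \<le> B) \<Longrightarrow> btilde K G \<le> 2 ^ card T * B"
  using assms
proof (induction T arbitrary: G rule: finite_induct)
  case empty
  then show ?case using empty(2)[of "{}"] by (simp add: del_empty)
next
  case (insert u T)
  show ?case
  proof (cases "u \<in> fst G")
    case True
    have "btilde K (del G {u}) \<le> 2 ^ card T * B"
    proof (rule insert.IH[OF simple_del[OF insert.prems(1)]])
      fix X assume "T \<subseteq> X"
      then show "btilde K (del (del G {u}) X) \<le> B" unfolding del_del by (intro insert.prems(2)) auto
    qed
    moreover have "btilde K (del G (nbhd G u)) \<le> 2 ^ card T * B"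
    proof (rule insert.IH[OF simple_del[OF insert.prems(1)]])
      fix X assume "T \<subseteq> X"
      then show "btilde K (del (del G (nbhd G u)) X) \<le> B" unfolding del_del
        by (intro insert.prems(2)) (auto simp: nbhd_def)
    qed
    moreover have "btilde K G \<le> btilde K (del G {u}) + btilde K (del G (nbhd G u))"
      by (rule btilde_del[OF insert.prems(1) True])
    moreover have "(2::nat) ^ card (insert u T) * B = 2 ^ card T * B + 2 ^ card T * B"
      using insert.hyps by simp
    ultimately show ?thesis by linarith
  next
    case False
    have "btilde K G \<le> 2 ^ card T * B"
    proof (rule insert.IH[OF insert.prems(1)])
      fix X assume "T \<subseteq> X"
      then have "btilde K (del G (insert u X)) \<le> B" by (intro insert.prems(2)) auto
      then show "btilde K (del G X) \<le> B" using del_outside[OF insert.prems(1) False] by simp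
    qed
    then show ?thesis using insert.hyps by simp
  qed
qed

lemma graphs_finite: "finite {G :: nat graph. simple_graph G \<and> fst G \<subseteq> {..<N}}"
proof -
  let ?F = "(\<lambda>(V, R). (V, \<lambda>x y. (x, y) \<in> R)) ` (Pow {..<N} \<times> Pow ({..<N} \<times> {..<N}))"
  have "{G :: nat graph. simple_graph G \<and> fst G \<subseteq> {..<N}} \<subseteq> ?F"
  proof
    fix G :: "nat graph" assume G: "G \<in> {G. simple_graph G \<and> fst G \<subseteq> {..<N}}"
    define R where "R = {(x, y). snd G x y}"
    have "R \<subseteq> {..<N} \<times> {..<N}" using G unfolding R_def simple_graph_def by auto
    moreover have "G = (fst G, \<lambda>x y. (x, y) \<in> R)" unfolding R_def by simp
    ultimately show "G \<in> ?F" using G by (intro image_eqI[of _ _ "(fst G, R)"]) auto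
  qed
  moreover have "finite ?F" by simp
  ultimately show ?thesis by (rule finite_subset)
qed

lemma btilde_set_finite:
  "finite {btilde K G | G. simple_graph G \<and> fst G \<subseteq> {..<n} \<and> \<not> has_induced_copy H G}"
proof -
  have "{btilde K G | G. simple_graph G \<and> fst G \<subseteq> {..<n} \<and> \<not> has_induced_copy H G}
     \<subseteq> btilde K ` {G :: nat graph. simple_graph G \<and> fst G \<subseteq> {..<n}}" by blast
  then show ?thesis using graphs_finite finite_surj by blast
qed

lemma bbar_upper:
  assumes "simple_graph G" "fst G \<subseteq> {..<n}" "\<not> has_induced_copy H G"
  shows "btilde K G \<le> bbar K H n"
  unfolding bbar_def
  by (rule le_cSup_finite[OF btilde_set_finite]) (use assms in blast)

lemma Sup_nat_bound:
  assumes "finite (S :: nat set)" "\<And>x. x \<in> S \<Longrightarrow> P x" "P 0"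
  shows "P (Sup S)"
proof (cases "S = {}")
  case True then show ?thesis using assms by simp
next
  case False
  then have "Sup S \<in> S" using assms(1) by (simp add: cSup_eq_Max)
  then show ?thesis using assms(2) by blast
qed

lemma copy_del: "has_induced_copy H (del G X) \<Longrightarrow> has_induced_copy H G"
  unfolding has_induced_copy_def
proof (elim exE conjE)
  fix f assume f: "inj_on f (fst H)" "f ` fst H \<subseteq> fst (del G X)"
    "\<forall>x\<in>fst H. \<forall>y\<in>fst H. snd (del G X) (f x) (f y) = snd H x y"
  show "\<exists>f. inj_on f (fst H) \<and> f ` fst H \<subseteq> fst G \<and> (\<forall>x\<in>fst H. \<forall>y\<in>fst H. snd G (f x) (f y) = snd H x y)"
  proof (intro exI conjI)
    show "inj_on f (fst H)" by fact
    show "f ` fst H \<subseteq> fst G" using f(2) by auto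
    show "\<forall>x\<in>fst H. \<forall>y\<in>fst H. snd G (f x) (f y) = snd H x y"
    proof (intro ballI)
      fix x y assume xy: "x \<in> fst H" "y \<in> fst H"
      then have "f x \<notin> X" "f y \<notin> X" using f(2) by auto
      moreover have "snd (del G X) (f x) (f y) = snd H x y" using f(3) xy by blast
      ultimately show "snd G (f x) (f y) = snd H x y" by simp
    qed
  qed
qed

lemma H1_free_union:
  assumes "\<not> has_induced_copy H1 G"
  shows "\<not> has_induced_copy (disj_union H1 H2) G"
proof
  assume "has_induced_copy (disj_union H1 H2) G"
  then obtain f where f: "inj_on f (fst (disj_union H1 H2))" "f ` fst (disj_union H1 H2) \<subseteq> fst G"
    "\<forall>x\<in>fst (disj_union H1 H2). \<forall>y\<in>fst (disj_union H1 H2). snd G (f x) (f y) = snd (disj_union H1 H2) x y"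
    unfolding has_induced_copy_def by blast
  have "has_induced_copy H1 G" unfolding has_induced_copy_def
  proof (intro exI conjI)
    show "inj_on (f \<circ> Inl) (fst H1)" using f(1) unfolding disj_union_def by (auto simp: inj_on_def)
    show "(f \<circ> Inl) ` fst H1 \<subseteq> fst G" using f(2) unfolding disj_union_def by auto
    show "\<forall>x\<in>fst H1. \<forall>y\<in>fst H1. snd G ((f \<circ> Inl) x) ((f \<circ> Inl) y) = snd H1 x y"
      using f(3) unfolding disj_union_def by auto
  qed
  then show False using assms by simp
qed

lemma du_fst: "fst (disj_union H1 H2) = Inl ` fst H1 \<union> Inr ` fst H2"
  by (simp add: disj_union_def)

lemma du_snd [simp]:
  "snd (disj_union H1 H2) (Inl a) (Inl b) = snd H1 a b"
  "snd (disj_union H1 H2) (Inr c) (Inr d) = snd H2 c d"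
  "snd (disj_union H1 H2) (Inl a) (Inr d) = False"
  "snd (disj_union H1 H2) (Inr c) (Inl b) = False"
  by (simp_all add: disj_union_def)

lemma H2_free_rest:
  assumes G: "simple_graph G"
    and f: "inj_on f (fst H1)" "f ` fst H1 \<subseteq> fst G" "\<forall>x\<in>fst H1. \<forall>y\<in>fst H1. snd G (f x) (f y) = snd H1 x y"
    and X: "(\<Union>s\<in>f ` fst H1. nbhd G s) \<subseteq> X"
    and U: "\<not> has_induced_copy (disj_union H1 H2) G"
  shows "\<not> has_induced_copy H2 (del G X)"
proof
  assume "has_induced_copy H2 (del G X)"
  then obtain g where g: "inj_on g (fst H2)" "g ` fst H2 \<subseteq> fst G - X"
    "\<forall>x\<in>fst H2. \<forall>y\<in>fst H2. snd (del G X) (g x) (g y) = snd H2 x y"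
    unfolding has_induced_copy_def by auto
  have sym: "\<And>x y. snd G x y \<Longrightarrow> snd G y x" using G unfolding simple_graph_def by blast
  define h where "h = case_sum f g"
  have gX: "g y \<notin> X" if "y \<in> fst H2" for y using g(2) that by blast
  have noadj: "\<not> snd G (f x) (g y)" if "x \<in> fst H1" "y \<in> fst H2" for x y
  proof
    assume "snd G (f x) (g y)"
    then have "g y \<in> nbhd G (f x)" by (simp add: nbhd_def)
    then have "g y \<in> X" using X that by blast
    then show False using gX that by blast
  qed
  have fg: "f x \<noteq> g y" if "x \<in> fst H1" "y \<in> fst H2" for x y
  proof
    assume "f x = g y"
    moreover have "f x \<in> nbhd G (f x)" by (simp add: nbhd_def)
    ultimately have "g y \<in> nbhd G (f x)" by simp
    then have "g y \<in> X" using X that by blast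
    then show False using gX that by blast
  qed
  have "has_induced_copy (disj_union H1 H2) G" unfolding has_induced_copy_def
  proof (intro exI conjI)
    show "inj_on h (fst (disj_union H1 H2))"
    proof (rule inj_onI)
      fix x y assume x: "x \<in> fst (disj_union H1 H2)" and y: "y \<in> fst (disj_union H1 H2)" and e: "h x = h y"
      show "x = y"
      proof (cases x)
        case (Inl a) note xa = this
        then have a: "a \<in> fst H1" using x by (auto simp: du_fst)
        show ?thesis
        proof (cases y)
          case (Inl b)
          then have "b \<in> fst H1" using y by (auto simp: du_fst)
          then show ?thesis using xa Inl a e f(1) by (simp add: h_def inj_on_def)
        next
          case (Inr b)
          then have "b \<in> fst H2" using y by (auto simp: du_fst)
          then show ?thesis using xa Inr a e fg by (simp add: h_def)
        qed
      next
        case (Inr a) note xa = this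
        then have a: "a \<in> fst H2" using x by (auto simp: du_fst)
        show ?thesis
        proof (cases y)
          case (Inl b)
          then have "b \<in> fst H1" using y by (auto simp: du_fst)
          then show ?thesis using xa Inl a e fg by (metis h_def sum.case)
        next
          case (Inr b)
          then have "b \<in> fst H2" using y by (auto simp: du_fst)
          then show ?thesis using xa Inr a e g(1) by (simp add: h_def inj_on_def)
        qed
      qed
    qed
    show "h ` fst (disj_union H1 H2) \<subseteq> fst G" unfolding du_fst h_def using f(2) g(2) by auto
    show "\<forall>x\<in>fst (disj_union H1 H2). \<forall>y\<in>fst (disj_union H1 H2). snd G (h x) (h y) = snd (disj_union H1 H2) x y"
    proof (intro ballI)
      fix x y assume x: "x \<in> fst (disj_union H1 H2)" and y: "y \<in> fst (disj_union H1 H2)"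
      show "snd G (h x) (h y) = snd (disj_union H1 H2) x y"
      proof (cases x)
        case (Inl a) note xa = this
        then have a: "a \<in> fst H1" using x by (auto simp: du_fst)
        show ?thesis
        proof (cases y)
          case (Inl b)
          then have "b \<in> fst H1" using y by (auto simp: du_fst)
          then show ?thesis using xa Inl a f(3) by (simp add: h_def)
        next
          case (Inr b)
          then have "b \<in> fst H2" using y by (auto simp: du_fst)
          then show ?thesis using xa Inr a noadj by (simp add: h_def)
        qed
      next
        case (Inr a) note xa = this
        then have a: "a \<in> fst H2" using x by (auto simp: du_fst)
        show ?thesis
        proof (cases y)
          case (Inl b)
          then have "b \<in> fst H1" using y by (auto simp: du_fst)
          then show ?thesis using xa Inl a noadj sym by (auto simp: h_def)
        next
          case (Inr b)
          then have b: "b \<in> fst H2" using y by (auto simp: du_fst)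
          have "snd (del G X) (g a) (g b) = snd H2 a b" using g(3) a b by blast
          then show ?thesis using xa Inr a b gX by (simp add: h_def)
        qed
      qed
    qed
  qed
  then show False using U by simp
qed




lemma pow_rec:
  fixes c :: real
  assumes c1: "c \<ge> 1" and rec: "c \<le> c ^ d * (c - 1)" and m: "d < m"
  shows "c ^ (m - 1) + c ^ (m - d) \<le> c ^ m"
proof -
  obtain j where j: "m = Suc (d + j)" using m by (metis add_Suc_right less_imp_Suc_add)
  have "c ^ (m - 1) + c ^ (m - d) = c ^ j * (c ^ d + c)"
    unfolding j by (simp add: Suc_diff_le power_add algebra_simps)
  also have "\<dots> \<le> c ^ j * (c ^ d + c ^ d * (c - 1))"
    by (rule mult_left_mono) (use rec c1 in auto)
  also have "\<dots> = c ^ m" unfolding j by (simp add: power_add algebra_simps)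
  finally show ?thesis .
qed

lemma nbhd_sub: "simple_graph G \<Longrightarrow> s \<in> fst G \<Longrightarrow> nbhd G s \<subseteq> fst G"
  unfolding nbhd_def simple_graph_def by auto

lemma main_bound:
  fixes K :: "'k::field itself" and H1 :: "'a graph" and H2 :: "'b graph" and c :: real
  assumes H1: "simple_graph H1" and c1: "c \<ge> 1" and rec: "c \<le> c ^ d * (c - 1)"
  shows "\<forall>G. card (fst G) = m \<longrightarrow> simple_graph G \<longrightarrow> fst G \<subseteq> {..<N} \<longrightarrow>
     \<not> has_induced_copy (disj_union H1 H2) G \<longrightarrow>
     real (btilde K G) \<le> 2 ^ (card (fst H1) * d) * real (max (bbar K H1 N) (bbar K H2 N)) * c ^ m"
proof (induction m rule: less_induct)
  case (less m)
  define h where "h = card (fst H1)"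
  define M where "M = max (bbar K H1 N) (bbar K H2 N)"
  define A :: real where "A = 2 ^ (h * d) * real M"
  have A0: "A \<ge> 0" unfolding A_def by simp
  have AM: "real M \<le> A" unfolding A_def using mult_right_mono[of 1 "2 ^ (h * d)" "real M"] by simp
  have cm: "\<And>n. c ^ n \<ge> 1" using c1 by (simp add: one_le_power)
  show ?case
  proof (intro allI impI)
    fix G :: "nat graph"
    assume m: "card (fst G) = m" and G: "simple_graph G" and GN: "fst G \<subseteq> {..<N}"
      and GU: "\<not> has_induced_copy (disj_union H1 H2) G"
    have finV: "finite (fst G)" using G unfolding simple_graph_def by auto
    have "real (btilde K G) \<le> A * c ^ m"
    proof (cases "has_induced_copy H1 G")
      case False
      have "btilde K G \<le> bbar K H1 N" by (rule bbar_upper[OF G GN False])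
      then have "real (btilde K G) \<le> real M" unfolding M_def by simp
      also have "\<dots> \<le> A" by (rule AM)
      also have "\<dots> \<le> A * c ^ m" using A0 cm[of m] by (simp add: mult_le_cancel_left1)
      finally show ?thesis .
    next
      case True
      then obtain f where f: "inj_on f (fst H1)" "f ` fst H1 \<subseteq> fst G"
        "\<forall>x\<in>fst H1. \<forall>y\<in>fst H1. snd G (f x) (f y) = snd H1 x y"
        unfolding has_induced_copy_def by blast
      define S where "S = f ` fst H1"
      define T where "T = (\<Union>s\<in>S. nbhd G s)"
      have finH1: "finite (fst H1)" using H1 unfolding simple_graph_def by auto
      have finS: "finite S" unfolding S_def using finH1 by simp
      have cardS: "card S = h" unfolding S_def h_def using card_image[OF f(1)] .
      have TV: "T \<subseteq> fst G" unfolding T_def S_def using nbhd_sub[OF G] f(2) by blast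
      have finT: "finite T" using TV finV finite_subset by blast
      show ?thesis
      proof (cases "card T \<le> h * d")
        case True
        have "btilde K G \<le> 2 ^ card T * bbar K H2 N"
        proof (rule btilde_iter[OF finT G])
          fix X assume X: "T \<subseteq> X"
          show "btilde K (del G X) \<le> bbar K H2 N"
          proof (rule bbar_upper[OF simple_del[OF G]])
            show "fst (del G X) \<subseteq> {..<N}" using GN by auto
            show "\<not> has_induced_copy H2 (del G X)"
              by (rule H2_free_rest[OF G f _ GU]) (use X in \<open>auto simp: T_def S_def\<close>)
          qed
        qed
        also have "\<dots> \<le> 2 ^ (h * d) * M"
          by (rule mult_mono) (use True M_def in \<open>auto intro: power_increasing\<close>)
        finally have "real (btilde K G) \<le> real (2 ^ (h * d) * M)" by linarith
        also have "\<dots> = A" unfolding A_def by simp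
        also have "\<dots> \<le> A * c ^ m" using A0 cm[of m] by (simp add: mult_le_cancel_left1)
        finally show ?thesis .
      next
        case False
        obtain s where sS: "s \<in> S" and sd: "d < card (nbhd G s)"
        proof (rule ccontr)
          assume "\<not> thesis"
          then have le: "\<And>s. s \<in> S \<Longrightarrow> card (nbhd G s) \<le> d" using that by force
          have "card T \<le> (\<Sum>s\<in>S. card (nbhd G s))" unfolding T_def by (rule card_UN_le[OF finS])
          also have "\<dots> \<le> card S * d" using sum_bounded_above[of S "\<lambda>s. card (nbhd G s)" d] le by simp
          finally show False using False cardS by (simp add: mult.commute)
        qed
        have sV: "s \<in> fst G" using sS f(2) S_def by blast
        have NV: "nbhd G s \<subseteq> fst G" by (rule nbhd_sub[OF G sV])
        have finN: "finite (nbhd G s)" using NV finV finite_subset by blast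
        have dm: "d < m" using sd card_mono[OF finV NV] m by simp
        define m1 where "m1 = card (fst G - {s})"
        define m2 where "m2 = card (fst G - nbhd G s)"
        have m1e: "m1 = m - 1" unfolding m1_def using m sV finV by simp
        have m2e: "m2 = m - card (nbhd G s)" unfolding m2_def using m NV finV card_Diff_subset[OF finN NV] by simp
        have m1l: "m1 < m" using m1e dm by simp
        have m2l: "m2 < m" using m2e sd dm by simp
        have U1: "\<not> has_induced_copy (disj_union H1 H2) (del G {s})" using GU copy_del by blast
        have U2: "\<not> has_induced_copy (disj_union H1 H2) (del G (nbhd G s))" using GU copy_del by blast
        have b1: "real (btilde K (del G {s})) \<le> A * c ^ m1"
          using less.IH[OF m1l, rule_format, of "del G {s}"] simple_del[OF G] GN U1
          unfolding A_def M_def h_def m1_def by auto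
        have b2: "real (btilde K (del G (nbhd G s))) \<le> A * c ^ m2"
          using less.IH[OF m2l, rule_format, of "del G (nbhd G s)"] simple_del[OF G] GN U2
          unfolding A_def M_def h_def m2_def by auto
        have "btilde K G \<le> btilde K (del G {s}) + btilde K (del G (nbhd G s))"
          by (rule btilde_del[OF G sV])
        then have "real (btilde K G) \<le> A * c ^ m1 + A * c ^ m2" using b1 b2 by linarith
        also have "\<dots> \<le> A * c ^ (m - 1) + A * c ^ (m - d)"
        proof -
          have "c ^ m2 \<le> c ^ (m - d)" by (rule power_increasing) (use m2e sd c1 in auto)
          then show ?thesis using m1e A0 by (simp add: mult_left_mono)
        qed
        also have "\<dots> = A * (c ^ (m - 1) + c ^ (m - d))" by (simp add: algebra_simps)
        also have "\<dots> \<le> A * c ^ m" by (rule mult_left_mono[OF pow_rec[OF c1 rec dm] A0])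
        finally show ?thesis .
      qed
    qed
    then show "real (btilde K G) \<le> 2 ^ (card (fst H1) * d) * real (max (bbar K H1 N) (bbar K H2 N)) * c ^ m"
      unfolding A_def M_def h_def by simp
  qed
qed

lemma bbar_bound:
  fixes K :: "'k::field itself" and H1 :: "'a graph" and H2 :: "'b graph" and c :: real
  assumes H1: "simple_graph H1" and c1: "c \<ge> 1" and rec: "c \<le> c ^ d * (c - 1)"
  shows "real (bbar K (disj_union H1 H2) N) \<le>
     2 ^ (card (fst H1) * d) * real (max (bbar K H1 N) (bbar K H2 N)) * c ^ N"
proof -
  define B :: real where "B = 2 ^ (card (fst H1) * d) * real (max (bbar K H1 N) (bbar K H2 N))"
  have B0: "B \<ge> 0" unfolding B_def by simp
  have "real (Sup {btilde K G | G. simple_graph G \<and> fst G \<subseteq> {..<N} \<and> \<not> has_induced_copy (disj_union H1 H2) G})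
      \<le> B * c ^ N"
  proof (rule Sup_nat_bound[OF btilde_set_finite])
    show "real 0 \<le> B * c ^ N" using B0 c1 by simp
    fix x assume "x \<in> {btilde K G | G. simple_graph G \<and> fst G \<subseteq> {..<N} \<and> \<not> has_induced_copy (disj_union H1 H2) G}"
    then obtain G where G: "x = btilde K G" "simple_graph G" "fst G \<subseteq> {..<N}"
      "\<not> has_induced_copy (disj_union H1 H2) G" by blast
    have "real x \<le> B * c ^ card (fst G)"
      using main_bound[OF H1 c1 rec, where m = "card (fst G)" and N = N and K = K and ?H2.0 = H2] G unfolding B_def by blast
    also have "\<dots> \<le> B * c ^ N"
    proof (rule mult_left_mono[OF power_increasing B0])
      show "card (fst G) \<le> N" using card_mono[OF _ G(3)] by simp
    qed (use c1 in auto)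
    finally show "real x \<le> B * c ^ N" .
  qed
  then show ?thesis unfolding bbar_def B_def by simp
qed




lemma H2_free_union:
  assumes "\<not> has_induced_copy H2 G"
  shows "\<not> has_induced_copy (disj_union H1 H2) G"
proof
  assume "has_induced_copy (disj_union H1 H2) G"
  then obtain f where f: "inj_on f (fst (disj_union H1 H2))" "f ` fst (disj_union H1 H2) \<subseteq> fst G"
    "\<forall>x\<in>fst (disj_union H1 H2). \<forall>y\<in>fst (disj_union H1 H2). snd G (f x) (f y) = snd (disj_union H1 H2) x y"
    unfolding has_induced_copy_def by blast
  have "has_induced_copy H2 G" unfolding has_induced_copy_def
  proof (intro exI conjI)
    show "inj_on (f \<circ> Inr) (fst H2)" using f(1) unfolding du_fst by (auto simp: inj_on_def)
    show "(f \<circ> Inr) ` fst H2 \<subseteq> fst G" using f(2) unfolding du_fst by auto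
    show "\<forall>x\<in>fst H2. \<forall>y\<in>fst H2. snd G ((f \<circ> Inr) x) ((f \<circ> Inr) y) = snd H2 x y"
    proof (intro ballI)
      fix x y assume "x \<in> fst H2" "y \<in> fst H2"
      then have "Inr x \<in> fst (disj_union H1 H2)" "Inr y \<in> fst (disj_union H1 H2)" unfolding du_fst by auto
      then have "snd G (f (Inr x)) (f (Inr y)) = snd (disj_union H1 H2) (Inr x) (Inr y)" using f(3) by blast
      then show "snd G ((f \<circ> Inr) x) ((f \<circ> Inr) y) = snd H2 x y" by simp
    qed
  qed
  then show False using assms by simp
qed

lemma bbar_mono_free:
  assumes "\<And>G :: nat graph. \<not> has_induced_copy H G \<Longrightarrow> \<not> has_induced_copy H' G"
  shows "bbar K H n \<le> bbar K H' n"
proof -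
  have "bbar K H n = Sup {btilde K G | G. simple_graph G \<and> fst G \<subseteq> {..<n} \<and> \<not> has_induced_copy H G}"
    by (simp add: bbar_def)
  also have "\<dots> \<le> bbar K H' n"
  proof (rule Sup_nat_bound[OF btilde_set_finite])
    fix x assume "x \<in> {btilde K G | G. simple_graph G \<and> fst G \<subseteq> {..<n} \<and> \<not> has_induced_copy H G}"
    then obtain G where G: "x = btilde K G" "simple_graph G" "fst G \<subseteq> {..<n}" "\<not> has_induced_copy H G" by blast
    have "btilde K G \<le> bbar K H' n" by (rule bbar_upper[OF G(2,3) assms[OF G(4)]])
    then show "x \<le> bbar K H' n" using G(1) by simp
  qed simp
  finally show ?thesis .
qed

lemma root_mono: "0 \<le> x \<Longrightarrow> x \<le> y \<Longrightarrow> root n x \<le> root n y"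
  by (cases "n = 0") (auto intro: real_root_le_mono)

lemma limsup_max_le:
  fixes f g :: "nat \<Rightarrow> ereal"
  shows "limsup (\<lambda>n. max (f n) (g n)) \<le> max (limsup f) (limsup g)"
  unfolding Limsup_le_iff
proof (intro allI impI)
  fix y assume y: "max (limsup f) (limsup g) < y"
  have "\<forall>y>limsup f. eventually (\<lambda>n. y > f n) sequentially"
    using Limsup_le_iff[where C = "limsup f" and F = sequentially and X = f] by simp
  then have "eventually (\<lambda>n. f n < y) sequentially" using y by simp
  have "\<forall>y>limsup g. eventually (\<lambda>n. y > g n) sequentially"
    using Limsup_le_iff[where C = "limsup g" and F = sequentially and X = g] by simp
  then have "eventually (\<lambda>n. g n < y) sequentially" using y by simp
  moreover note \<open>eventually (\<lambda>n. f n < y) sequentially\<close>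
  ultimately show "eventually (\<lambda>n. max (f n) (g n) < y) sequentially"
    by (rule eventually_elim2) simp
qed

lemma my_max_ereal: "max (ereal x) (ereal y) = ereal (max x y)"
  by (simp add: max_def)

lemma Cbar_nonneg: "0 \<le> Cbar K H"
  unfolding Cbar_def
proof (rule le_Limsup)
  show "\<forall>\<^sub>F x in sequentially. 0 \<le> ereal (root x (real (bbar K H x)))"
    by (intro always_eventually allI) (simp add: real_root_ge_zero)
qed simp

lemma Cbar_le_scaled:
  fixes K :: "'k::field itself" and H1 :: "'a graph" and H2 :: "'b graph" and c :: real
  assumes H1: "simple_graph H1" and c: "c > 1"
  shows "Cbar K (disj_union H1 H2) \<le> ereal (c * c) * max (Cbar K H1) (Cbar K H2)"
proof -
  obtain d where d: "c / (c - 1) < c ^ d" using real_arch_pow[OF c] by blast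
  have rec: "c \<le> c ^ d * (c - 1)" using d c by (simp add: divide_less_eq)
  define E :: real where "E = 2 ^ (card (fst H1) * d)"
  have E0: "0 < E" unfolding E_def by simp
  have bnd: "\<And>N. real (bbar K (disj_union H1 H2) N) \<le> E * real (max (bbar K H1 N) (bbar K H2 N)) * c ^ N"
    unfolding E_def by (rule bbar_bound[OF H1]) (use c rec in auto)
  have ev1: "eventually (\<lambda>N. root N E < c) sequentially"
    using order_tendstoD(2)[OF LIMSEQ_root_const[OF E0] c] .
  have ev: "eventually (\<lambda>N. ereal (root N (real (bbar K (disj_union H1 H2) N))) \<le>
      ereal (c * c) * max (ereal (root N (real (bbar K H1 N)))) (ereal (root N (real (bbar K H2 N))))) sequentially"
    using ev1 eventually_gt_at_top[of 0]
  proof (rule eventually_elim2)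
    fix N :: nat assume rE: "root N E < c" and N: "0 < N"
    define ra where "ra = root N (real (bbar K H1 N))"
    define rb where "rb = root N (real (bbar K H2 N))"
    have rM: "root N (real (max (bbar K H1 N) (bbar K H2 N))) = max ra rb"
      unfolding ra_def rb_def by (simp add: max_def root_mono real_root_le_iff N)
    have mr0: "0 \<le> max ra rb" unfolding ra_def by (simp add: real_root_ge_zero le_max_iff_disj)
    have "root N (real (bbar K (disj_union H1 H2) N)) \<le> root N (E * real (max (bbar K H1 N) (bbar K H2 N)) * c ^ N)"
      by (rule root_mono[OF _ bnd]) simp
    also have "\<dots> = root N E * max ra rb * c"
      using c N by (simp add: real_root_mult rM real_root_power_cancel)
    also have "\<dots> \<le> c * max ra rb * c"
      using rE mr0 c by (intro mult_right_mono) auto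
    also have "\<dots> = c * c * max ra rb" by (simp only: mult.commute mult.left_commute)
    finally have X: "root N (real (bbar K (disj_union H1 H2) N)) \<le> c * c * max ra rb" .
    have Q: "ereal (c * c) * max (ereal ra) (ereal rb) = ereal (c * c * max ra rb)"
      by (simp only: my_max_ereal times_ereal.simps)
    show "ereal (root N (real (bbar K (disj_union H1 H2) N))) \<le>
      ereal (c * c) * max (ereal (root N (real (bbar K H1 N)))) (ereal (root N (real (bbar K H2 N))))"
      unfolding ra_def[symmetric] rb_def[symmetric] Q using X by (simp only: ereal_less_eq)
  qed
  have "Cbar K (disj_union H1 H2) \<le> limsup (\<lambda>N. ereal (c * c) * max (ereal (root N (real (bbar K H1 N)))) (ereal (root N (real (bbar K H2 N)))))"
    unfolding Cbar_def by (rule Limsup_mono[OF ev])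
  also have "\<dots> = ereal (c * c) * limsup (\<lambda>N. max (ereal (root N (real (bbar K H1 N)))) (ereal (root N (real (bbar K H2 N)))))"
    by (rule Limsup_ereal_mult_left) (use c in auto)
  also have "\<dots> \<le> ereal (c * c) * max (Cbar K H1) (Cbar K H2)"
    unfolding Cbar_def by (rule ereal_mult_left_mono[OF limsup_max_le]) (use c in auto)
  finally show ?thesis .
qed

theorem proposition5p2:
  fixes H1 :: "'a graph" and H2 :: "'b graph"
  assumes "simple_graph H1" and "simple_graph H2"
  shows "Cbar TYPE('k::field) (disj_union H1 H2) = max (Cbar TYPE('k) H1) (Cbar TYPE('k) H2)"
proof (rule antisym)
  define U where "U = Cbar TYPE('k) (disj_union H1 H2)"
  define Y where "Y = max (Cbar TYPE('k) H1) (Cbar TYPE('k) H2)"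
  have key: "\<And>c. c > 1 \<Longrightarrow> U \<le> ereal (c * c) * Y"
    unfolding U_def Y_def by (rule Cbar_le_scaled[OF assms(1)])
  have Y0: "0 \<le> Y" unfolding Y_def using Cbar_nonneg[of "TYPE('k)" H1] by (simp add: le_max_iff_disj)
  show "U \<le> Y" unfolding U_def[symmetric] Y_def[symmetric]
  proof (cases Y)
    case PInf then show ?thesis by simp
  next
    case MInf then show ?thesis using Y0 by simp
  next
    case (real y) note yY = this
    have y0: "0 \<le> y" using Y0 yY by simp
    show ?thesis
    proof (cases U)
      case MInf then show ?thesis by simp
    next
      case PInf
      then show ?thesis using key[of 2] yY by simp
    next
      case (real x) note xU = this
      show ?thesis
      proof (rule ccontr)
        assume "\<not> U \<le> Y"
        then have xy: "y < x" using xU yY by simp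
        show False
        proof (cases "y = 0")
          case True
          then show False using key[of 2] xU yY xy by simp
        next
          case False
          then have yp: "0 < y" using y0 by simp
          define c where "c = sqrt ((x + y) / (2 * y))"
          have q: "1 < (x + y) / (2 * y)" using xy yp by (simp add: field_simps)
          have c1: "1 < c" unfolding c_def using q by (simp add: real_less_rsqrt)
          have nn: "0 \<le> (x + y) / (2 * y)" using q by simp
          have cc: "c * c = (x + y) / (2 * y)"
            using real_sqrt_pow2[OF nn] unfolding c_def power2_eq_square .
          have "x \<le> c * c * y" using key[OF c1] xU yY by simp
          also have "\<dots> = (x + y) / 2" unfolding cc using yp by (simp add: field_simps)
          finally show False using xy by simp
        qed
      qed
    qed
  qed
next
  have "\<And>H. Cbar TYPE('k) H1 \<le> Cbar TYPE('k) (disj_union H1 H2)"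
    unfolding Cbar_def
    by (rule Limsup_mono, rule always_eventually, intro allI, simp,
        rule root_mono, simp, simp, rule bbar_mono_free, erule H1_free_union)
  moreover have "Cbar TYPE('k) H2 \<le> Cbar TYPE('k) (disj_union H1 H2)"
    unfolding Cbar_def
    by (rule Limsup_mono, rule always_eventually, intro allI, simp,
        rule root_mono, simp, simp, rule bbar_mono_free, erule H2_free_union)
  ultimately show "max (Cbar TYPE('k) H1) (Cbar TYPE('k) H2) \<le> Cbar TYPE('k) (disj_union H1 H2)" by simp
qed



end
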